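(* Suppose $\dim_{\mathbb{C}}N=n-m\le 3$, where $N=\mathrm{span}_{\mathbb{C}}\{I_{m+1},\dots,I_n\}$ is the nilpotent subalgebra of $\mathbb{A}_n^m$. Then for every circle $C$ as described in the context, $\lambda:=\int_C\zeta^{-1}\,d\zeta=2\pi i$ (that is, $2\pi i$ times the unit of $\mathbb{A}_n^m$).
   Context: Fix natural numbers $m\le n$. $\mathbb{A}_n^m$ is a commutative associative algebra with unit over $\mathbb{C}$ with a basis $\{I_k\}_{k=1}^n$ satisfying: (1) for $r,s\in\{1,\dots,m\}$, $I_rI_s=0$ if $r\ne s$ and $I_rI_r=I_r$; (2) for $r,s\in\{m+1,\dots,n\}$, $I_rI_s=\sum_{k=\max\{r,s\}+1}^{n}\Upsilon^{s}_{r,k}I_k$ with constants $\Upsilon^s_{r,k}\in\mathbb{C}$; (3) for each $s\in\{m+1,\dots,n\}$ there is a unique $u_s\in\{1,\dots,m\}$ such that for $r\in\{1,\dots,m\}$, $I_rI_s=I_s$ if $r=u_s$ and $0$ otherwise. Unit $1=\sum_{u=1}^mI_u$; $\mathbb{A}_n^m=S\oplus_sN$ with $S=\mathrm{span}\{I_1,\dots,I_m\}$ and $N=\mathrm{span}\{I_{m+1},\dots,I_n\}$. $f_u(\sum_k\lambda_kI_k)=\lambda_u$. Let $e_1=1$, $e_2=\sum_ka_kI_k$, $e_3=\sum_kb_kI_k$ ($a_k,b_k\in\mathbb{C}$) be linearly independent over $\mathbb{R}$; $\zeta=xe_1+ye_2+ze_3$ ($x,y,z\in\mathbb{R}$), $E_3$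 their real span. Standing assumption: $f_u(E_3)=\mathbb{C}$ for all $u=1,\dots,m$. $\zeta$ is non-invertible exactly when $(x,y,z)$ lies on one of the lines $L_u=\{x+y\,\mathrm{Re}\,a_u+z\,\mathrm{Re}\,b_u=0,\ y\,\mathrm{Im}\,a_u+z\,\mathrm{Im}\,b_u=0\}$. The circle: $C\subset E_3$ is $C=\{xe_1+ye_2+ze_3:(x,y,z)\in C'\}$ for a Euclidean circle $C'\subset\mathbb{R}^3$ of radius $R>0$ centered at the origin, such that for every $u$ the image $f_u(C)$ is a positively oriented closed Jordan curve in $\mathbb{C}$ bounding a domain containing $0$. Integral: for a Jordan rectifiable curve $\gamma$ and continuous $\Psi=\sum_k(U_k+iV_k)I_k$ on $\gamma_\zeta$, $\int_{\gamma_\zeta}\Psi d\zeta:=\sum_kI_k\int_\gamma(U_k+iV_k)dx+\sum_ke_2I_k\int_\gamma(U_k+iV_k)dy+\sum_ke_3I_k\int_\gamma(U_k+iV_k)dz$. *)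

theory Defs
  imports "HOL-Complex_Analysis.Complex_Analysis"
begin

text \<open>Elements of the algebra A_n^m are coefficient vectors (nat => complex)
  w.r.t. the basis I_1,...,I_n, supported on {1..n}.
  Parameters: m n (dimensions), Ups s r k = Upsilon^s_{r,k}, u s = u_s.\<close>

definition alg_elem :: "nat \<Rightarrow> (nat \<Rightarrow> complex) \<Rightarrow> bool" where
  "alg_elem n v \<longleftrightarrow> (\<forall>k. k \<notin> {1..n} \<longrightarrow> v k = 0)"

definition basis_vec :: "nat \<Rightarrow> nat \<Rightarrow> complex" where
  "basis_vec r = (\<lambda>k. if k = r then 1 else 0)"

definition basis_mult ::
  "nat \<Rightarrow> nat \<Rightarrow> (nat \<Rightarrow> nat \<Rightarrow> nat \<Rightarrow> complex) \<Rightarrow> (nat \<Rightarrow> nat) \<Rightarrow> nat \<Rightarrow> nat \<Rightarrow> nat \<Rightarrow> complex" where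
  "basis_mult m n Ups u r s =
     (if r \<le> m \<and> s \<le> m then (if r = s then basis_vec r else (\<lambda>_. 0))
      else if m < r \<and> m < s then (\<lambda>k. if max r s < k \<and> k \<le> n then Ups s r k else 0)
      else if r \<le> m then (if r = u s then basis_vec s else (\<lambda>_. 0))
      else (if s = u r then basis_vec r else (\<lambda>_. 0)))"

definition alg_mult ::
  "nat \<Rightarrow> nat \<Rightarrow> (nat \<Rightarrow> nat \<Rightarrow> nat \<Rightarrow> complex) \<Rightarrow> (nat \<Rightarrow> nat)
   \<Rightarrow> (nat \<Rightarrow> complex) \<Rightarrow> (nat \<Rightarrow> complex) \<Rightarrow> nat \<Rightarrow> complex" where
  "alg_mult m n Ups u a b =
     (\<lambda>k. \<Sum>r\<in>{1..n}. \<Sum>s\<in>{1..n}. a r * b s * basis_mult m n Ups u r s k)"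

definition is_algebra_Anm ::
  "nat \<Rightarrow> nat \<Rightarrow> (nat \<Rightarrow> nat \<Rightarrow> nat \<Rightarrow> complex) \<Rightarrow> (nat \<Rightarrow> nat) \<Rightarrow> bool" where
  "is_algebra_Anm m n Ups u \<longleftrightarrow>
     1 \<le> m \<and> m \<le> n \<and>
     (\<forall>s\<in>{m+1..n}. u s \<in> {1..m}) \<and>
     (\<forall>a b. alg_elem n a \<longrightarrow> alg_elem n b \<longrightarrow> alg_mult m n Ups u a b = alg_mult m n Ups u b a) \<and>
     (\<forall>a b c. alg_elem n a \<longrightarrow> alg_elem n b \<longrightarrow> alg_elem n c \<longrightarrow>
        alg_mult m n Ups u (alg_mult m n Ups u a b) c = alg_mult m n Ups u a (alg_mult m n Ups u b c))"

definition alg_one :: "nat \<Rightarrow> nat \<Rightarrow> complex" where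
  "alg_one m = (\<lambda>k. if 1 \<le> k \<and> k \<le> m then 1 else 0)"

text \<open>Inverse (meaningful for invertible elements, where it is unique).\<close>
definition alg_inv ::
  "nat \<Rightarrow> nat \<Rightarrow> (nat \<Rightarrow> nat \<Rightarrow> nat \<Rightarrow> complex) \<Rightarrow> (nat \<Rightarrow> nat)
   \<Rightarrow> (nat \<Rightarrow> complex) \<Rightarrow> nat \<Rightarrow> complex" where
  "alg_inv m n Ups u a = (SOME b. alg_elem n b \<and> alg_mult m n Ups u a b = alg_one m)"

definition restr :: "nat \<Rightarrow> (nat \<Rightarrow> complex) \<Rightarrow> nat \<Rightarrow> complex" where
  "restr n c = (\<lambda>k. if k \<in> {1..n} then c k else 0)"

text \<open>zeta = x e_1 + y e_2 + z e_3, with e_1 = 1, e_2 = sum a_k I_k, e_3 = sum b_k I_k;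
  the point (x,y,z) is P $ 1, P $ 2, P $ 3.\<close>
definition zeta :: "nat \<Rightarrow> nat \<Rightarrow> (nat \<Rightarrow> complex) \<Rightarrow> (nat \<Rightarrow> complex) \<Rightarrow> real^3 \<Rightarrow> nat \<Rightarrow> complex" where
  "zeta m n a b P = (\<lambda>k. of_real (P $ 1) * alg_one m k + of_real (P $ 2) * restr n a k
                         + of_real (P $ 3) * restr n b k)"

definition f_coord :: "nat \<Rightarrow> (nat \<Rightarrow> complex) \<Rightarrow> complex" where
  "f_coord u w = w u"

definition line_int :: "(real \<Rightarrow> real^3) \<Rightarrow> (real^3 \<Rightarrow> complex) \<Rightarrow> 3 \<Rightarrow> complex" where
  "line_int \<gamma> g j = integral {0..2*pi} (\<lambda>t. g (\<gamma> t) * of_real (vector_derivative \<gamma> (at t) $ j))"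

text \<open>The hypercomplex integral
  int Psi d zeta = sum_k I_k int Psi_k dx + sum_k e_2 I_k int Psi_k dy + sum_k e_3 I_k int Psi_k dz.\<close>
definition alg_integral ::
  "nat \<Rightarrow> nat \<Rightarrow> (nat \<Rightarrow> nat \<Rightarrow> nat \<Rightarrow> complex) \<Rightarrow> (nat \<Rightarrow> nat) \<Rightarrow> (nat \<Rightarrow> complex) \<Rightarrow> (nat \<Rightarrow> complex)
   \<Rightarrow> (real \<Rightarrow> real^3) \<Rightarrow> (real^3 \<Rightarrow> nat \<Rightarrow> complex) \<Rightarrow> nat \<Rightarrow> complex" where
  "alg_integral m n Ups u a b \<gamma> \<Psi> =
    (let X = restr n (\<lambda>k. line_int \<gamma> (\<lambda>P. \<Psi> P k) 1);
         Y = restr n (\<lambda>k. line_int \<gamma> (\<lambda>P. \<Psi> P k) 2);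
         Z = restr n (\<lambda>k. line_int \<gamma> (\<lambda>P. \<Psi> P k) 3)
     in (\<lambda>k. X k + alg_mult m n Ups u (restr n a) Y k + alg_mult m n Ups u (restr n b) Z k))"

text \<open>Positively oriented parametrisation of the circle C' of radius R centred at 0
  in the plane spanned by the orthonormal vectors p, q (both orientations arise by
  swapping q with -q).\<close>
definition circ :: "real \<Rightarrow> real^3 \<Rightarrow> real^3 \<Rightarrow> real \<Rightarrow> real^3" where
  "circ R p q t = R *\<^sub>R (cos t *\<^sub>R p + sin t *\<^sub>R q)"

end

theory Submission
  imports Defs "HOL-Algebra.Ring"
begin

locale AL =
  fixes m n :: nat and Ups :: "nat \<Rightarrow> nat \<Rightarrow> nat \<Rightarrow> complex" and u :: "nat \<Rightarrow> nat"
  assumes alg: "is_algebra_Anm m n Ups u"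
begin

abbreviation "mul \<equiv> alg_mult m n Ups u"
abbreviation "e1 \<equiv> alg_one m"

lemma m_ge1: "1 \<le> m" and m_le: "m \<le> n" and u_rng: "\<And>s. s \<in> {m+1..n} \<Longrightarrow> u s \<in> {1..m}"
  using alg unfolding is_algebra_Anm_def by auto

lemma bm_out: "k \<notin> {1..n} \<Longrightarrow> r \<in> {1..n} \<Longrightarrow> s \<in> {1..n} \<Longrightarrow> basis_mult m n Ups u r s k = 0"
  by (auto simp: basis_mult_def basis_vec_def)

lemma elem_mul: "alg_elem n (mul a b)"
  unfolding alg_elem_def alg_mult_def by (auto simp: bm_out)

lemma mul_restr: "mul a b = mul (restr n a) (restr n b)"
  unfolding alg_mult_def restr_def by (intro ext sum.cong) auto

lemma elem_restr: "alg_elem n (restr n a)"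
  unfolding alg_elem_def restr_def by auto

lemma restr_id: "alg_elem n a \<Longrightarrow> restr n a = a"
  unfolding alg_elem_def restr_def by auto

lemma comm: "mul a b = mul b a"
  using alg elem_restr unfolding is_algebra_Anm_def by (metis mul_restr)

lemma assoc: "mul (mul a b) c = mul a (mul b c)"
proof -
  have "mul (mul a b) c = mul (mul (restr n a) (restr n b)) (restr n c)"
    by (metis mul_restr restr_id elem_mul)
  also have "\<dots> = mul (restr n a) (mul (restr n b) (restr n c))"
    using alg elem_restr unfolding is_algebra_Anm_def by blast
  also have "\<dots> = mul a (mul b c)"
    by (metis mul_restr restr_id elem_mul)
  finally show ?thesis .
qed

lemma elem_one: "alg_elem n e1"
  using m_le unfolding alg_elem_def alg_one_def by auto

lemma one_bm: assumes "s \<in> {1..n}" "r \<in> {1..n}"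
  shows "e1 r * basis_mult m n Ups u r s k =
     (if r = (if s \<le> m then s else u s) then basis_vec s k else 0)"
  using assms u_rng[of s] by (auto simp: alg_one_def basis_mult_def basis_vec_def)

lemma mul_one: assumes "alg_elem n a" shows "mul e1 a = a"
proof
  fix k
  have "mul e1 a k = (\<Sum>s\<in>{1..n}. a s * (\<Sum>r\<in>{1..n}. e1 r * basis_mult m n Ups u r s k))"
    unfolding alg_mult_def
    by (subst sum.swap) (simp add: sum_distrib_left algebra_simps)
  also have "\<dots> = (\<Sum>s\<in>{1..n}. a s * basis_vec s k)"
  proof (intro sum.cong refl)
    fix s assume s: "s \<in> {1..n}"
    have "(if s \<le> m then s else u s) \<in> {1..n}" using s u_rng[of s] m_le by auto
    then show "a s * (\<Sum>r\<in>{1..n}. e1 r * basis_mult m n Ups u r s k) = a s * basis_vec s k"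
      by (simp add: one_bm[OF s] sum.delta')
  qed
  also have "\<dots> = a k"
    using assms by (auto simp: basis_vec_def alg_elem_def if_distrib sum.delta' cong: if_cong)
  finally show "mul e1 a k = a k" .
qed

lemma ss_bm: assumes "k \<in> {1..m}" "r \<in> {1..n}" "s \<in> {1..n}"
  shows "basis_mult m n Ups u r s k = (if r = k \<and> s = k then 1 else 0)"
  using assms by (auto simp: basis_mult_def basis_vec_def)

lemma sum_delta2: "finite S \<Longrightarrow> (\<Sum>s\<in>S. if P \<and> s = k then f s else 0) = (if P \<and> k \<in> S then f k else 0)"
  by (cases P) (simp_all add: sum.delta')

lemma mul_ss_coord: assumes "k \<in> {1..m}" shows "mul a b k = a k * b k"
proof -
  have k: "k \<in> {1..n}" using assms m_le by auto
  have "mul a b k = (\<Sum>r\<in>{1..n}. \<Sum>s\<in>{1..n}. if r = k \<and> s = k then a r * b s else 0)"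
    unfolding alg_mult_def by (intro sum.cong refl) (simp add: ss_bm[OF assms])
  also have "\<dots> = (\<Sum>r\<in>{1..n}. if r = k then a r * b k else 0)"
    using k by (intro sum.cong refl) (simp add: sum_delta2)
  also have "\<dots> = a k * b k" using k by (simp add: sum.delta')
  finally show ?thesis .
qed

definition ss :: "(nat \<Rightarrow> complex) \<Rightarrow> bool" where "ss a \<longleftrightarrow> (\<forall>k. k \<notin> {1..m} \<longrightarrow> a k = 0)"

lemma mul_ss: assumes "ss a" "ss b" shows "mul a b = (\<lambda>k. a k * b k)"
proof
  fix k show "mul a b k = a k * b k"
  proof (cases "k \<in> {1..m}")
    case True then show ?thesis by (rule mul_ss_coord)
  next
    case False
    have h: "a r * b s * basis_mult m n Ups u r s k = 0" if "r \<in> {1..n}" "s \<in> {1..n}" for r s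
      using assms False that unfolding ss_def
      by (cases "r \<in> {1..m}"; cases "s \<in> {1..m}") (auto simp: basis_mult_def basis_vec_def)
    have 0: "a k * b k = 0" using False assms unfolding ss_def by simp
    show ?thesis unfolding 0 unfolding alg_mult_def by (intro sum.neutral ballI h)
  qed
qed

definition supp :: "nat \<Rightarrow> (nat \<Rightarrow> complex) \<Rightarrow> bool" where
  "supp d a \<longleftrightarrow> (\<forall>k. k \<le> m + d \<longrightarrow> a k = 0)"

lemma supp_mul: assumes "supp d1 a" "supp d2 b" shows "supp (max d1 d2 + 1) (mul a b)"
  unfolding supp_def
proof (intro allI impI)
  fix k assume k: "k \<le> m + (max d1 d2 + 1)"
  have h: "a r * b s * basis_mult m n Ups u r s k = 0" for r s
  proof (cases "r \<le> m + d1 \<or> s \<le> m + d2")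
    case True then show ?thesis using assms unfolding supp_def by auto
  next
    case False
    then show ?thesis using k by (auto simp: basis_mult_def)
  qed
  show "mul a b k = 0" unfolding alg_mult_def by (intro sum.neutral ballI h)
qed

lemma supp_zero: assumes "supp 3 a" "alg_elem n a" "n - m \<le> 3" shows "a = (\<lambda>_. 0)"
proof
  fix k show "a k = 0"
  proof (cases "k \<le> m + 3")
    case True then show ?thesis using assms(1) unfolding supp_def by auto
  next
    case False then have "k \<notin> {1..n}" using assms(3) by auto
    then show ?thesis using assms(2) unfolding alg_elem_def by auto
  qed
qed

lemma elem_add: "alg_elem n a \<Longrightarrow> alg_elem n b \<Longrightarrow> alg_elem n (\<lambda>k. a k + b k)"
  unfolding alg_elem_def by auto

lemma mul_add_left: "mul (\<lambda>k. a k + b k) c = (\<lambda>k. mul a c k + mul b c k)"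
  unfolding alg_mult_def by (simp add: algebra_simps sum.distrib)

definition RR :: "(nat \<Rightarrow> complex) ring" where
  "RR = \<lparr>carrier = {v. alg_elem n v}, monoid.mult = mul, one = e1, zero = (\<lambda>_. 0), add = (\<lambda>a b k. a k + b k)\<rparr>"

lemma RR_simps[simp]: "carrier RR = {v. alg_elem n v}" "x \<otimes>\<^bsub>RR\<^esub> y = mul x y" "\<one>\<^bsub>RR\<^esub> = e1"
  "\<zero>\<^bsub>RR\<^esub> = (\<lambda>_. 0)" "x \<oplus>\<^bsub>RR\<^esub> y = (\<lambda>k. x k + y k)"
  by (simp_all add: RR_def)

lemma cring_RR: "cring RR"
proof (rule cringI)
  show "abelian_group RR"
  proof (rule abelian_groupI)
    fix x assume x: "x \<in> carrier RR"
    have "alg_elem n (\<lambda>k. - x k)" using x by (simp add: alg_elem_def)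
    moreover have "(\<lambda>k. - x k) \<oplus>\<^bsub>RR\<^esub> x = \<zero>\<^bsub>RR\<^esub>" by simp
    ultimately show "\<exists>y\<in>carrier RR. y \<oplus>\<^bsub>RR\<^esub> x = \<zero>\<^bsub>RR\<^esub>" by force
  next
    fix x y assume "x \<in> carrier RR" "y \<in> carrier RR"
    then show "x \<oplus>\<^bsub>RR\<^esub> y \<in> carrier RR" by (simp add: elem_add)
  next
    show "\<zero>\<^bsub>RR\<^esub> \<in> carrier RR" by (simp add: alg_elem_def)
  next
    fix x y z show "(x \<oplus>\<^bsub>RR\<^esub> y) \<oplus>\<^bsub>RR\<^esub> z = x \<oplus>\<^bsub>RR\<^esub> (y \<oplus>\<^bsub>RR\<^esub> z)"
      by (simp add: add.assoc)
  next
    fix x y show "x \<oplus>\<^bsub>RR\<^esub> y = y \<oplus>\<^bsub>RR\<^esub> x" by (simp add: add.commute)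
  next
    fix x show "\<zero>\<^bsub>RR\<^esub> \<oplus>\<^bsub>RR\<^esub> x = x" by simp
  qed
  show "comm_monoid RR"
  proof (rule comm_monoidI)
    fix x y z
    show "x \<otimes>\<^bsub>RR\<^esub> y \<in> carrier RR" by (simp add: elem_mul)
    show "x \<otimes>\<^bsub>RR\<^esub> y \<otimes>\<^bsub>RR\<^esub> z = x \<otimes>\<^bsub>RR\<^esub> (y \<otimes>\<^bsub>RR\<^esub> z)" by (simp only: RR_simps assoc)
    show "x \<otimes>\<^bsub>RR\<^esub> y = y \<otimes>\<^bsub>RR\<^esub> x" by (simp only: RR_simps comm[of x y])
  next
    show "\<one>\<^bsub>RR\<^esub> \<in> carrier RR" by (simp add: elem_one)
  next
    fix x assume "x \<in> carrier RR" then show "\<one>\<^bsub>RR\<^esub> \<otimes>\<^bsub>RR\<^esub> x = x" by (simp add: mul_one)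
  qed
next
  fix x y z show "(x \<oplus>\<^bsub>RR\<^esub> y) \<otimes>\<^bsub>RR\<^esub> z = x \<otimes>\<^bsub>RR\<^esub> z \<oplus>\<^bsub>RR\<^esub> y \<otimes>\<^bsub>RR\<^esub> z"
    by (simp only: RR_simps mul_add_left)
qed

sublocale R: cring RR by (rule cring_RR)

lemma RR_minus[simp]: "x \<in> carrier RR \<Longrightarrow> \<ominus>\<^bsub>RR\<^esub> x = (\<lambda>k. - x k)"
  by (rule R.minus_equality) (auto simp: alg_elem_def)

lemma RR_diff[simp]: "y \<in> carrier RR \<Longrightarrow> x \<ominus>\<^bsub>RR\<^esub> y = (\<lambda>k. x k - y k)"
  by (simp add: a_minus_def)

lemma mul_deriv:
  assumes "\<And>r. ((\<lambda>s. A s r) has_vector_derivative A' r) (at t within T)"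
    and "\<And>r. ((\<lambda>s. B s r) has_vector_derivative B' r) (at t within T)"
  shows "((\<lambda>s. mul (A s) (B s) k) has_vector_derivative (mul A' (B t) k + mul (A t) B' k)) (at t within T)"
proof -
  have "((\<lambda>s. \<Sum>r\<in>{1..n}. \<Sum>q\<in>{1..n}. A s r * B s q * basis_mult m n Ups u r q k) has_vector_derivative
     (\<Sum>r\<in>{1..n}. \<Sum>q\<in>{1..n}. (A t r * B' q + A' r * B t q) * basis_mult m n Ups u r q k)) (at t within T)"
    by (intro has_vector_derivative_sum has_vector_derivative_mult_left has_vector_derivative_mult assms)
  moreover have "(\<Sum>r\<in>{1..n}. \<Sum>q\<in>{1..n}. (A t r * B' q + A' r * B t q) * basis_mult m n Ups u r q k)
     = mul A' (B t) k + mul (A t) B' k"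
    unfolding alg_mult_def by (simp add: algebra_simps sum.distrib)
  ultimately show ?thesis unfolding alg_mult_def by simp
qed

lemma mul_cont:
  assumes "\<And>r. continuous_on T (\<lambda>s. A s r)" "\<And>r. continuous_on T (\<lambda>s. B s r)"
  shows "continuous_on T (\<lambda>s. mul (A s) (B s) k)"
  unfolding alg_mult_def by (intro continuous_intros assms)

lemma mul_int:
  assumes "\<And>q. q \<in> {1..n} \<Longrightarrow> ((\<lambda>t. f t q) has_integral I q) T"
  shows "((\<lambda>t. mul A (f t) k) has_integral mul A I k) T"
  unfolding alg_mult_def
  by (intro has_integral_sum finite_atLeastAtMost has_integral_mult_left has_integral_mult_right assms)

lemma mul_lin3: "mul A (\<lambda>q. x * B q + y * C q + z * D q) k = x * mul A B k + y * mul A C k + z * mul A D k"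
  unfolding alg_mult_def by (simp add: algebra_simps sum.distrib sum_distrib_left)

lemma poly4: "x \<in> carrier RR \<Longrightarrow> (\<one>\<^bsub>RR\<^esub> \<ominus>\<^bsub>RR\<^esub> x \<oplus>\<^bsub>RR\<^esub> x \<otimes>\<^bsub>RR\<^esub> x \<ominus>\<^bsub>RR\<^esub> x \<otimes>\<^bsub>RR\<^esub> x \<otimes>\<^bsub>RR\<^esub> x) \<otimes>\<^bsub>RR\<^esub> (x \<oplus>\<^bsub>RR\<^esub> \<one>\<^bsub>RR\<^esub>)
   = \<one>\<^bsub>RR\<^esub> \<ominus>\<^bsub>RR\<^esub> x \<otimes>\<^bsub>RR\<^esub> x \<otimes>\<^bsub>RR\<^esub> x \<otimes>\<^bsub>RR\<^esub> x"
  by algebra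

lemma poly5: "x \<in> carrier RR \<Longrightarrow> y \<in> carrier RR \<Longrightarrow> (\<one>\<^bsub>RR\<^esub> \<ominus>\<^bsub>RR\<^esub> x \<oplus>\<^bsub>RR\<^esub> x \<otimes>\<^bsub>RR\<^esub> x \<ominus>\<^bsub>RR\<^esub> x \<otimes>\<^bsub>RR\<^esub> x \<otimes>\<^bsub>RR\<^esub> x) \<otimes>\<^bsub>RR\<^esub> y
   = y \<ominus>\<^bsub>RR\<^esub> x \<otimes>\<^bsub>RR\<^esub> y \<oplus>\<^bsub>RR\<^esub> x \<otimes>\<^bsub>RR\<^esub> x \<otimes>\<^bsub>RR\<^esub> y \<ominus>\<^bsub>RR\<^esub> x \<otimes>\<^bsub>RR\<^esub> x \<otimes>\<^bsub>RR\<^esub> x \<otimes>\<^bsub>RR\<^esub> y"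
  by algebra

end

lemma mul_scal: "alg_mult m n Ups u A (\<lambda>q. B q * y) k = y * alg_mult m n Ups u A B k"
  unfolding alg_mult_def by (simp add: algebra_simps sum_distrib_left)

lemma elem_diff: "alg_elem n a \<Longrightarrow> alg_elem n b \<Longrightarrow> alg_elem n (\<lambda>k. a k - b k)"
  unfolding alg_elem_def by auto

theorem theorem7:
  fixes m n :: nat and Ups :: "nat \<Rightarrow> nat \<Rightarrow> nat \<Rightarrow> complex" and u :: "nat \<Rightarrow> nat"
    and a b :: "nat \<Rightarrow> complex" and R :: real and p q :: "real^3"
  assumes alg: "is_algebra_Anm m n Ups u"
    and dimN: "n - m \<le> 3"
    and indep: "\<And>x y z :: real. (\<lambda>k. of_real x * alg_one m k + of_real y * restr n a k + of_real z * restr n b k) = (\<lambda>_. 0)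
                  \<Longrightarrow> x = 0 \<and> y = 0 \<and> z = 0"
    and standing: "\<And>v. v \<in> {1..m} \<Longrightarrow> f_coord v ` range (zeta m n a b) = UNIV"
    and R: "R > 0"
    and pq: "norm p = 1" "norm q = 1" "p \<bullet> q = 0"
    and curve: "\<And>v. v \<in> {1..m} \<Longrightarrow>
       (let g = (\<lambda>t. f_coord v (zeta m n a b (circ R p q (2 * pi * t))))
        in simple_path g \<and> 0 \<in> inside (path_image g) \<and> winding_number g 0 = 1)"
  shows "alg_integral m n Ups u a b (circ R p q) (\<lambda>P. alg_inv m n Ups u (zeta m n a b P))
           = (\<lambda>k. 2 * of_real pi * \<i> * alg_one m k)"
proof -
  interpret AL m n Ups u by unfold_locales (rule alg)
  define gam where "gam = circ R p q"
  define gamd where "gamd t = (- (R * sin t)) *\<^sub>R p + (R* cos t) *\<^sub>R q" for t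
  define Z where "Z = zeta m n a b"
  define W where "W t = Z (gam t)" for t
  define Wd where "Wd t = Z (gamd t)" for t
  define T where "T = {0..2 * pi}"
  have gam_der: "(gam has_vector_derivative gamd t) (at t)" for t
    unfolding gam_def gamd_def circ_def
    by (auto intro!: derivative_eq_intros simp: algebra_simps)
  have vd: "vector_derivative gam (at t) = gamd t" for t
    using gam_der by (rule vector_derivative_at)
  have Z_lin: "Z (x *\<^sub>R P + y *\<^sub>R Q) = (\<lambda>k. of_real x * Z P k + of_real y * Z Q k)" for x y P Q
    unfolding Z_def zeta_def by (auto simp: algebra_simps)
  have W_eq: "W t = (\<lambda>k. of_real (R* cos t) * Z p k + of_real (R* sin t) * Z q k)" for t
  proof -
    have "gam t = (R* cos t) *\<^sub>R p + (R* sin t) *\<^sub>R q" unfolding gam_def circ_def by (simp add: algebra_simps)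
    then show ?thesis unfolding W_def by (simp add: Z_lin)
  qed
  have Wd_eq: "Wd t = (\<lambda>k. of_real (- (R * sin t)) * Z p k + of_real (R* cos t) * Z q k)" for t
    unfolding Wd_def gamd_def by (rule Z_lin)
  have W_der: "((\<lambda>s. W s k) has_vector_derivative Wd t k) (at t)" for t k
    unfolding W_eq Wd_eq by (auto intro!: derivative_eq_intros)
  have W_cont: "continuous_on S (\<lambda>s. W s k)" for S k
    unfolding W_eq by (intro continuous_intros)
  have Wd_cont: "continuous_on S (\<lambda>s. Wd s k)" for S k
    unfolding Wd_eq by (intro continuous_intros)
  have elemZ: "alg_elem n (Z P)" for P
    using m_le unfolding Z_def zeta_def alg_elem_def alg_one_def restr_def by auto
  have elemW: "alg_elem n (W t)" and elemWd: "alg_elem n (Wd t)" for t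
    unfolding W_def Wd_def by (rule elemZ)+
  have Wper: "W (2 * pi) = W 0" unfolding W_eq by simp
  have gW: "f_coord v (zeta m n a b (circ R p q (2 * pi * s))) = W (2 * pi * s) v" for v s
    unfolding f_coord_def W_def Z_def gam_def ..
  have Wnz: "W t v \<noteq> 0" if "t \<in> T" "v \<in> {1..m}" for t v
  proof -
    define g where "g = (\<lambda>s. f_coord v (zeta m n a b (circ R p q (2 * pi * s))))"
    have "0 \<in> inside (path_image g)" using curve[OF that(2)] unfolding g_def Let_def by blast
    then have "0 \<notin> path_image g" using inside_no_overlap by blast
    moreover have "t / (2 * pi) \<in> {0..1}" using that(1) unfolding T_def by auto
    ultimately have "g (t/(2 * pi)) \<noteq> 0" unfolding path_image_def by (metis image_eqI)
    then show ?thesis unfolding g_def gW by simp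
  qed
  have wind: "((\<lambda>t. Wd t v / W t v) has_integral (2 * pi*\<i>)) T" if v: "v \<in> {1..m}" for v
  proof -
    define g where "g = (\<lambda>s. f_coord v (zeta m n a b (circ R p q (2 * pi * s))))"
    have g_eq: "g = (\<lambda>s. W (2 * pi * s) v)" unfolding g_def gW ..
    define gd where "gd s = of_real (2 * pi) * Wd (2 * pi * s) v" for s
    have g_der: "(g has_vector_derivative gd s) (at s)" for s
      unfolding g_eq gd_def W_eq Wd_eq by (auto intro!: derivative_eq_intros simp: algebra_simps)
    have "g C1_differentiable_on {0..1}"
      unfolding C1_differentiable_on_def
      by (intro exI[of _ gd] conjI ballI g_der) (unfold gd_def Wd_eq, intro continuous_intros)
    then have vp: "valid_path g" unfolding valid_path_def by (rule C1_differentiable_imp_piecewise)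
    have c: "simple_path g \<and> 0 \<in> inside (path_image g) \<and> winding_number g 0 = 1"
      using curve[OF v] unfolding g_def Let_def by blast
    then have "0 \<notin> path_image g" using inside_no_overlap by blast
    from has_contour_integral_winding_number[OF vp this] c
    have "((\<lambda>w. 1/(w - 0)) has_contour_integral (2 * pi*\<i>)) g" by simp
    then have i1: "((\<lambda>s. 1/(g s - 0) * vector_derivative g (at s)) has_integral (2 * pi*\<i>)) {0..1}"
      unfolding has_contour_integral .
    have "((\<lambda>s. of_real (2 * pi) * (Wd (2 * pi * s) v / W (2 * pi * s) v)) has_integral (2 * pi*\<i>)) {0..1}"
      using i1 by (rule has_integral_eq[rotated]) (simp only: vector_derivative_at[OF g_der], simp add: gd_def g_eq)
    then have "((\<lambda>s. of_real (2 * pi) * (Wd (2 * pi * s) v / W (2 * pi * s) v)) has_integral (2 * pi*\<i>)) (cbox 0 1)"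
      by (simp only: cbox_interval)
    from has_integral_affinity[OF this, of "1/(2 * pi)" 0]
    have "((\<lambda>t. of_real (2 * pi) * (Wd t v / W t v)) has_integral (2 * pi) *\<^sub>R (2 * pi*\<i>)) T"
      unfolding T_def by (simp add: image_mult_atLeastAtMost)
    from has_integral_mult_right[OF this, of "of_real (1/(2 * pi))"]
    show ?thesis by (simp add: scaleR_conv_of_real mult_ac)
  qed
  define Dv where "Dv t = (\<lambda>k. if k \<in> {1..m} then inverse (W t k) else 0)" for t
  define Dd where "Dd t = (\<lambda>k. if k \<in> {1..m} then - (Wd t k / (W t k)^2) else 0)" for t
  define Sd where "Sd t = (\<lambda>k. if k \<in> {1..m} then Wd t k else 0)" for t
  define S where "S t = (\<lambda>k. if k \<in> {1..m} then Wd t k / W t k else 0)" for t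
  define nu where "nu t = (\<lambda>k. mul (Dv t) (W t) k - e1 k)" for t
  define nud where "nud t = (\<lambda>k. mul (Dd t) (W t) k + mul (Dv t) (Wd t) k)" for t
  define n2 where "n2 t = mul (nu t) (nu t)" for t
  define n2d where "n2d t = (\<lambda>k. mul (nud t) (nu t) k + mul (nu t) (nud t) k)" for t
  define n3 where "n3 t = mul (n2 t) (nu t)" for t
  define n3d where "n3d t = (\<lambda>k. mul (n2d t) (nu t) k + mul (n2 t) (nud t) k)" for t
  define H where "H t = (\<lambda>k. nu t k - n2 t k / 2 + n3 t k / 3)" for t
  define Hd where "Hd t = (\<lambda>k. nud t k - n2d t k / 2 + n3d t k / 3)" for t
  define P where "P t = (\<lambda>k. e1 k - nu t k + n2 t k - n3 t k)" for t
  define c where "c t = mul (Dv t) (P t)" for t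
  have ss_elem: "alg_elem n x" if "ss x" for x
    using that m_le unfolding ss_def alg_elem_def by auto
  have ssDv: "ss (Dv t)" and ssDd: "ss (Dd t)" and ssSd: "ss (Sd t)" and ssS: "ss (S t)" for t
    unfolding ss_def Dv_def Dd_def Sd_def S_def by auto
  have eNu: "alg_elem n (nu t)" for t unfolding nu_def by (intro elem_diff elem_mul elem_one)
  have eNud: "alg_elem n (nud t)" for t unfolding nud_def by (intro elem_add elem_mul)
  have eP: "alg_elem n (P t)" for t unfolding P_def
    by (intro elem_diff elem_add elem_one eNu) (simp_all add: n2_def n3_def elem_mul)
  have car: "Dv t \<in> carrier RR" "Dd t \<in> carrier RR" "Sd t \<in> carrier RR" "S t \<in> carrier RR"
     "W t \<in> carrier RR" "Wd t \<in> carrier RR" "nu t \<in> carrier RR" "nud t \<in> carrier RR"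
     "n2 t \<in> carrier RR" "n3 t \<in> carrier RR" "P t \<in> carrier RR" "c t \<in> carrier RR" for t
    using ss_elem[OF ssDv] ss_elem[OF ssDd] ss_elem[OF ssSd] ss_elem[OF ssS] elemW elemWd eNu eNud eP
    by (auto simp: n2_def n3_def c_def elem_mul)
  have F1: "Dd t = \<ominus>\<^bsub>RR\<^esub> (Dv t \<otimes>\<^bsub>RR\<^esub> Dv t \<otimes>\<^bsub>RR\<^esub> Sd t)" if t: "t \<in> T" for t
  proof -
    have "ss (\<lambda>k. Dv t k * Dv t k)" using ssDv[of t] unfolding ss_def by simp
    then have "Dv t \<otimes>\<^bsub>RR\<^esub> Dv t \<otimes>\<^bsub>RR\<^esub> Sd t = (\<lambda>k. Dv t k * Dv t k * Sd t k)"
      by (simp add: mul_ss[OF ssDv ssDv] mul_ss[OF _ ssSd])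
    then show ?thesis using car(1,3)[of t] Wnz[OF t]
      by (auto simp: elem_mul Dd_def Dv_def Sd_def fun_eq_iff field_simps power2_eq_square)
  qed
  have F2: "S t = Dv t \<otimes>\<^bsub>RR\<^esub> Sd t" if t: "t \<in> T" for t
    using Wnz[OF t] by (simp only: RR_simps mul_ss[OF ssDv ssSd]) (auto simp: S_def Dv_def Sd_def fun_eq_iff field_simps)
  have F3: "nu t = Dv t \<otimes>\<^bsub>RR\<^esub> W t \<ominus>\<^bsub>RR\<^esub> \<one>\<^bsub>RR\<^esub>" for t
    by (simp add: nu_def elem_one)
  have F4: "nud t = Dd t \<otimes>\<^bsub>RR\<^esub> W t \<oplus>\<^bsub>RR\<^esub> Dv t \<otimes>\<^bsub>RR\<^esub> Wd t" for t
    by (simp add: nud_def)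
  have supp_nu: "supp 0 (nu t)" if t: "t \<in> T" for t
    unfolding supp_def
  proof (intro allI impI)
    fix k assume k: "k \<le> m + 0"
    show "nu t k = 0"
    proof (cases "k = 0")
      case True then show ?thesis using eNu[of t] unfolding alg_elem_def by auto
    next
      case False then have k1: "k \<in> {1..m}" using k by auto
      show ?thesis using Wnz[OF t k1] k1 by (simp add: nu_def mul_ss_coord Dv_def alg_one_def)
    qed
  qed
  have supp_nud: "supp 0 (nud t)" if t: "t \<in> T" for t
    unfolding supp_def
  proof (intro allI impI)
    fix k assume k: "k \<le> m + 0"
    show "nud t k = 0"
    proof (cases "k = 0")
      case True then show ?thesis using eNud[of t] unfolding alg_elem_def by auto
    next
      case False then have k1: "k \<in> {1..m}" using k by auto
      show ?thesis using Wnz[OF t k1] k1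
        by (simp add: nud_def mul_ss_coord Dv_def Dd_def field_simps power2_eq_square)
    qed
  qed
  have F5: "nu t \<otimes>\<^bsub>RR\<^esub> nu t \<otimes>\<^bsub>RR\<^esub> nu t \<otimes>\<^bsub>RR\<^esub> nu t = \<zero>\<^bsub>RR\<^esub>"
      "nu t \<otimes>\<^bsub>RR\<^esub> nu t \<otimes>\<^bsub>RR\<^esub> nu t \<otimes>\<^bsub>RR\<^esub> nud t = \<zero>\<^bsub>RR\<^esub>" if t: "t \<in> T" for t
  proof -
    have s3: "supp 2 (nu t \<otimes>\<^bsub>RR\<^esub> nu t \<otimes>\<^bsub>RR\<^esub> nu t)"
      using supp_mul[OF supp_mul[OF supp_nu supp_nu] supp_nu, OF t t t] by (simp add: numeral_2_eq_2)
    show "nu t \<otimes>\<^bsub>RR\<^esub> nu t \<otimes>\<^bsub>RR\<^esub> nu t \<otimes>\<^bsub>RR\<^esub> nu t = \<zero>\<^bsub>RR\<^esub>"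
      using supp_zero[OF _ elem_mul dimN] supp_mul[OF s3 supp_nu[OF t]] by simp
    show "nu t \<otimes>\<^bsub>RR\<^esub> nu t \<otimes>\<^bsub>RR\<^esub> nu t \<otimes>\<^bsub>RR\<^esub> nud t = \<zero>\<^bsub>RR\<^esub>"
      using supp_zero[OF _ elem_mul dimN] supp_mul[OF s3 supp_nud[OF t]] by simp
  qed
  have Pr: "P t = \<one>\<^bsub>RR\<^esub> \<ominus>\<^bsub>RR\<^esub> nu t \<oplus>\<^bsub>RR\<^esub> nu t \<otimes>\<^bsub>RR\<^esub> nu t \<ominus>\<^bsub>RR\<^esub> nu t \<otimes>\<^bsub>RR\<^esub> nu t \<otimes>\<^bsub>RR\<^esub> nu t" for t
    using car(7)[of t] by (simp add: P_def n2_def n3_def elem_mul)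
  have cr: "c t = Dv t \<otimes>\<^bsub>RR\<^esub> P t" for t by (simp add: c_def)
  have PX: "P t \<otimes>\<^bsub>RR\<^esub> (Dv t \<otimes>\<^bsub>RR\<^esub> W t) = \<one>\<^bsub>RR\<^esub>" if t: "t \<in> T" for t
  proof -
    have X: "Dv t \<otimes>\<^bsub>RR\<^esub> W t = nu t \<oplus>\<^bsub>RR\<^esub> \<one>\<^bsub>RR\<^esub>"
      unfolding F3 using car[of t] by algebra
    have "P t \<otimes>\<^bsub>RR\<^esub> (Dv t \<otimes>\<^bsub>RR\<^esub> W t) = \<one>\<^bsub>RR\<^esub> \<ominus>\<^bsub>RR\<^esub> nu t \<otimes>\<^bsub>RR\<^esub> nu t \<otimes>\<^bsub>RR\<^esub> nu t \<otimes>\<^bsub>RR\<^esub> nu t"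
      unfolding X Pr by (rule poly4[OF car(7)])
    also have "\<dots> = \<one>\<^bsub>RR\<^esub>" unfolding F5(1)[OF t] by algebra
    finally show ?thesis .
  qed
  have G1: "W t \<otimes>\<^bsub>RR\<^esub> c t = \<one>\<^bsub>RR\<^esub>" if t: "t \<in> T" for t
  proof -
    have "W t \<otimes>\<^bsub>RR\<^esub> c t = P t \<otimes>\<^bsub>RR\<^esub> (Dv t \<otimes>\<^bsub>RR\<^esub> W t)"
      unfolding cr using car[of t] by algebra
    then show ?thesis using PX[OF t] by simp
  qed
  have G2: "c t \<otimes>\<^bsub>RR\<^esub> Wd t = S t \<oplus>\<^bsub>RR\<^esub> (nud t \<ominus>\<^bsub>RR\<^esub> nu t \<otimes>\<^bsub>RR\<^esub> nud t \<oplus>\<^bsub>RR\<^esub> nu t \<otimes>\<^bsub>RR\<^esub> nu t \<otimes>\<^bsub>RR\<^esub> nud t)"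
    if t: "t \<in> T" for t
  proof -
    have E1: "P t \<otimes>\<^bsub>RR\<^esub> nud t = \<ominus>\<^bsub>RR\<^esub> ((P t \<otimes>\<^bsub>RR\<^esub> (Dv t \<otimes>\<^bsub>RR\<^esub> W t)) \<otimes>\<^bsub>RR\<^esub> (Dv t \<otimes>\<^bsub>RR\<^esub> Sd t)) \<oplus>\<^bsub>RR\<^esub> c t \<otimes>\<^bsub>RR\<^esub> Wd t"
      unfolding F4 F1[OF t] cr using car[of t] by algebra
    have E2: "P t \<otimes>\<^bsub>RR\<^esub> nud t = nud t \<ominus>\<^bsub>RR\<^esub> nu t \<otimes>\<^bsub>RR\<^esub> nud t \<oplus>\<^bsub>RR\<^esub> nu t \<otimes>\<^bsub>RR\<^esub> nu t \<otimes>\<^bsub>RR\<^esub> nud t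
       \<ominus>\<^bsub>RR\<^esub> nu t \<otimes>\<^bsub>RR\<^esub> nu t \<otimes>\<^bsub>RR\<^esub> nu t \<otimes>\<^bsub>RR\<^esub> nud t"
      unfolding Pr by (rule poly5[OF car(7,8)])
    have E3: "P t \<otimes>\<^bsub>RR\<^esub> nud t = \<ominus>\<^bsub>RR\<^esub> S t \<oplus>\<^bsub>RR\<^esub> c t \<otimes>\<^bsub>RR\<^esub> Wd t"
      using E1 unfolding PX[OF t] F2[OF t] R.l_one[OF R.m_closed[OF car(1) car(3)]] .
    have "c t \<otimes>\<^bsub>RR\<^esub> Wd t = S t \<oplus>\<^bsub>RR\<^esub> (\<ominus>\<^bsub>RR\<^esub> S t \<oplus>\<^bsub>RR\<^esub> c t \<otimes>\<^bsub>RR\<^esub> Wd t)"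
      using car[of t] by algebra
    also have "\<dots> = S t \<oplus>\<^bsub>RR\<^esub> (P t \<otimes>\<^bsub>RR\<^esub> nud t)" unfolding E3 ..
    also have "\<dots> = S t \<oplus>\<^bsub>RR\<^esub> (nud t \<ominus>\<^bsub>RR\<^esub> nu t \<otimes>\<^bsub>RR\<^esub> nud t \<oplus>\<^bsub>RR\<^esub> nu t \<otimes>\<^bsub>RR\<^esub> nu t \<otimes>\<^bsub>RR\<^esub> nud t
       \<ominus>\<^bsub>RR\<^esub> \<zero>\<^bsub>RR\<^esub>)" unfolding E2 F5(2)[OF t] ..
    also have "\<dots> = S t \<oplus>\<^bsub>RR\<^esub> (nud t \<ominus>\<^bsub>RR\<^esub> nu t \<otimes>\<^bsub>RR\<^esub> nud t \<oplus>\<^bsub>RR\<^esub> nu t \<otimes>\<^bsub>RR\<^esub> nu t \<otimes>\<^bsub>RR\<^esub> nud t)"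
      using car[of t] by algebra
    finally show ?thesis .
  qed
  have HdE: "Hd t = nud t \<ominus>\<^bsub>RR\<^esub> nu t \<otimes>\<^bsub>RR\<^esub> nud t \<oplus>\<^bsub>RR\<^esub> nu t \<otimes>\<^bsub>RR\<^esub> nu t \<otimes>\<^bsub>RR\<^esub> nud t" for t
  proof -
    have a2: "n2d t = nu t \<otimes>\<^bsub>RR\<^esub> nud t \<oplus>\<^bsub>RR\<^esub> nu t \<otimes>\<^bsub>RR\<^esub> nud t"
    proof -
      have "n2d t = nud t \<otimes>\<^bsub>RR\<^esub> nu t \<oplus>\<^bsub>RR\<^esub> nu t \<otimes>\<^bsub>RR\<^esub> nud t" by (simp add: n2d_def)
      also have "\<dots> = nu t \<otimes>\<^bsub>RR\<^esub> nud t \<oplus>\<^bsub>RR\<^esub> nu t \<otimes>\<^bsub>RR\<^esub> nud t" using car[of t] by algebra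
      finally show ?thesis .
    qed
    have a3: "n3d t = nu t \<otimes>\<^bsub>RR\<^esub> nu t \<otimes>\<^bsub>RR\<^esub> nud t \<oplus>\<^bsub>RR\<^esub> nu t \<otimes>\<^bsub>RR\<^esub> nu t \<otimes>\<^bsub>RR\<^esub> nud t \<oplus>\<^bsub>RR\<^esub> nu t \<otimes>\<^bsub>RR\<^esub> nu t \<otimes>\<^bsub>RR\<^esub> nud t"
    proof -
      have "n3d t = n2d t \<otimes>\<^bsub>RR\<^esub> nu t \<oplus>\<^bsub>RR\<^esub> (nu t \<otimes>\<^bsub>RR\<^esub> nu t) \<otimes>\<^bsub>RR\<^esub> nud t" by (simp add: n3d_def n2_def)
      also have "\<dots> = nu t \<otimes>\<^bsub>RR\<^esub> nu t \<otimes>\<^bsub>RR\<^esub> nud t \<oplus>\<^bsub>RR\<^esub> nu t \<otimes>\<^bsub>RR\<^esub> nu t \<otimes>\<^bsub>RR\<^esub> nud t \<oplus>\<^bsub>RR\<^esub> nu t \<otimes>\<^bsub>RR\<^esub> nu t \<otimes>\<^bsub>RR\<^esub> nud t"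
        unfolding a2 using car[of t] by algebra
      finally show ?thesis .
    qed
    show ?thesis using a2 a3 car[of t] by (simp add: Hd_def elem_mul fun_eq_iff)
  qed
  have inv_eq: "alg_inv m n Ups u (W t) = c t" if t: "t \<in> T" for t
    unfolding alg_inv_def
  proof (rule some_equality)
    show "alg_elem n (c t) \<and> mul (W t) (c t) = e1" using car(12)[of t] G1[OF t] by simp
  next
    fix y assume y: "alg_elem n y \<and> mul (W t) y = e1"
    then have yc: "y \<in> carrier RR" and yw: "W t \<otimes>\<^bsub>RR\<^esub> y = \<one>\<^bsub>RR\<^esub>" by simp_all
    have "y = y \<otimes>\<^bsub>RR\<^esub> (W t \<otimes>\<^bsub>RR\<^esub> c t)" unfolding G1[OF t] using R.r_one[OF yc] by simp
    also have "\<dots> = (W t \<otimes>\<^bsub>RR\<^esub> y) \<otimes>\<^bsub>RR\<^esub> c t" using yc car[of t] by algebra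
    also have "\<dots> = c t" using yw car(12)[of t] by (simp add: mul_one)
    finally show "y = c t" .
  qed
  have Dv_der: "((\<lambda>s. Dv s r) has_vector_derivative Dd t r) (at t within T)" if t: "t \<in> T" for t r
  proof (cases "r \<in> {1..m}")
    case True
    have "((inverse \<circ> (\<lambda>s. W s r)) has_vector_derivative (Wd t r * - (inverse (W t r) ^ Suc (Suc 0)))) (at t within T)"
      by (rule field_vector_diff_chain_within[OF has_vector_derivative_at_within[OF W_der] DERIV_inverse[OF Wnz[OF t True]]])
    moreover have "Wd t r * - (inverse (W t r) ^ Suc (Suc 0)) = Dd t r"
      using True Wnz[OF t True] by (simp add: Dd_def field_simps power2_eq_square)
    ultimately show ?thesis using True by (simp add: Dv_def o_def)
  next
    case False
    then have "(\<lambda>s. Dv s r) = (\<lambda>s. 0)" "Dd t r = 0" unfolding Dv_def Dd_def by auto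
    then show ?thesis by simp
  qed
  have Wder: "((\<lambda>s. W s r) has_vector_derivative Wd t r) (at t within T)" for t r
    by (rule has_vector_derivative_at_within[OF W_der])
  have nu_der: "((\<lambda>s. nu s r) has_vector_derivative nud t r) (at t within T)" if t: "t \<in> T" for t r
    unfolding nu_def nud_def has_vector_derivative_diff_const
    by (rule mul_deriv[OF Dv_der[OF t] Wder])
  have n2_der: "((\<lambda>s. n2 s r) has_vector_derivative n2d t r) (at t within T)" if t: "t \<in> T" for t r
    unfolding n2_def n2d_def by (rule mul_deriv[OF nu_der[OF t] nu_der[OF t]])
  have n3_der: "((\<lambda>s. n3 s r) has_vector_derivative n3d t r) (at t within T)" if t: "t \<in> T" for t r
    unfolding n3_def n3d_def by (rule mul_deriv[OF n2_der[OF t] nu_der[OF t]])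
  have H_der: "((\<lambda>s. H s r) has_vector_derivative Hd t r) (at t within T)" if t: "t \<in> T" for t r
    unfolding H_def Hd_def
    by (intro has_vector_derivative_add has_vector_derivative_diff has_vector_derivative_divide
        nu_der n2_der n3_der t)
  have Hper: "H (2 * pi) = H 0"
    unfolding H_def n3_def n2_def nu_def Dv_def Wper ..
  have H_int: "((\<lambda>t. Hd t r) has_integral 0) T" for r
  proof -
    have "((\<lambda>t. Hd t r) has_integral (H (2 * pi) r - H 0 r)) T"
      unfolding T_def
      by (rule fundamental_theorem_of_calculus) (use H_der T_def in auto)
    then show ?thesis using Hper by simp
  qed
  have Dv_cont: "continuous_on T (\<lambda>s. Dv s r)" for r
  proof (cases "r \<in> {1..m}")
    case True then show ?thesis
      unfolding Dv_def using Wnz by (auto intro!: continuous_intros W_cont)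
  next
    case False
    then have "(\<lambda>s. Dv s r) = (\<lambda>s. 0)" unfolding Dv_def by auto
    then show ?thesis by (metis continuous_on_const)
  qed
  have nu_cont: "continuous_on T (\<lambda>s. nu s r)" for r
    unfolding nu_def by (intro continuous_intros mul_cont Dv_cont W_cont)
  have n2_cont: "continuous_on T (\<lambda>s. n2 s r)" for r
    unfolding n2_def by (intro mul_cont nu_cont)
  have n3_cont: "continuous_on T (\<lambda>s. n3 s r)" for r
    unfolding n3_def by (intro mul_cont nu_cont n2_cont)
  have c_cont: "continuous_on T (\<lambda>s. c s r)" for r
    unfolding c_def P_def by (intro mul_cont Dv_cont continuous_intros nu_cont n2_cont n3_cont)
  have SH: "mul (c t) (Wd t) k = S t k + Hd t k" if t: "t \<in> T" for t k
  proof -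
    have "c t \<otimes>\<^bsub>RR\<^esub> Wd t = S t \<oplus>\<^bsub>RR\<^esub> Hd t" unfolding HdE by (rule G2[OF t])
    then show ?thesis by (simp add: fun_eq_iff)
  qed
  have SH_int: "((\<lambda>t. S t k + Hd t k) has_integral (2 * of_real pi * \<i> * e1 k)) T" for k
  proof (cases "k \<in> {1..m}")
    case True
    have "((\<lambda>t. Wd t k / W t k + Hd t k) has_integral (2 * pi * \<i> + 0)) T"
      by (intro has_integral_add wind True H_int)
    then show ?thesis using True by (simp add: S_def alg_one_def)
  next
    case False
    have "((\<lambda>t. 0 + Hd t k) has_integral (0 + 0)) T"
      by (intro has_integral_add has_integral_0 H_int)
    moreover have "S t k = 0" for t using False unfolding S_def by auto
    moreover have "e1 k = 0" using False unfolding alg_one_def by auto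
    ultimately show ?thesis by simp
  qed
  define xd where "xd t = complex_of_real (gamd t $ 1)" for t
  define yd where "yd t = complex_of_real (gamd t $ 2)" for t
  define zd where "zd t = complex_of_real (gamd t $ 3)" for t
  have gamd_cont: "continuous_on T (\<lambda>t. complex_of_real (gamd t $ j))" for j
    unfolding gamd_def by (simp, intro continuous_intros)
  have LI: "line_int (circ R p q) (\<lambda>P. alg_inv m n Ups u (zeta m n a b P) r) j
      = integral T (\<lambda>t. c t r * complex_of_real (gamd t $ j))" for r j
    unfolding line_int_def T_def
    by (rule integral_cong) (simp add: gam_def[symmetric] Z_def[symmetric] W_def[symmetric] vd inv_eq T_def)
  have Ihas: "((\<lambda>t. c t r * complex_of_real (gamd t $ j)) has_integral
      line_int (circ R p q) (\<lambda>P. alg_inv m n Ups u (zeta m n a b P) r) j) T" for r j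
    unfolding LI
    by (rule integrable_integral, unfold T_def, rule integrable_continuous_interval,
        intro continuous_on_mult c_cont[unfolded T_def] gamd_cont[unfolded T_def])
  show ?thesis
  proof
    fix k
    show "alg_integral m n Ups u a b (circ R p q) (\<lambda>P. alg_inv m n Ups u (zeta m n a b P)) k
        = 2 * of_real pi * \<i> * e1 k"
    proof (cases "k \<in> {1..n}")
      case False
      then have "e1 k = 0" using m_le by (auto simp: alg_one_def)
      moreover have "mul A B k = 0" for A B using elem_mul[of A B] False unfolding alg_elem_def by auto
      moreover have "restr n f k = 0" for f using False unfolding restr_def by auto
      ultimately show ?thesis unfolding alg_integral_def Let_def by simp
    next
      case True
      define LHS where "LHS = alg_integral m n Ups u a b (circ R p q) (\<lambda>P. alg_inv m n Ups u (zeta m n a b P)) k"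
      have h1: "((\<lambda>t. c t k * xd t) has_integral
         restr n (\<lambda>k. line_int (circ R p q) (\<lambda>P. alg_inv m n Ups u (zeta m n a b P) k) 1) k) T"
        using Ihas[of k 1] True unfolding xd_def restr_def by simp
      have h2: "((\<lambda>t. mul (restr n a) (\<lambda>q. c t q * yd t) k) has_integral
         mul (restr n a) (restr n (\<lambda>k. line_int (circ R p q) (\<lambda>P. alg_inv m n Ups u (zeta m n a b P) k) 2)) k) T"
        by (rule mul_int) (use Ihas in \<open>simp add: yd_def restr_def\<close>)
      have h3: "((\<lambda>t. mul (restr n b) (\<lambda>q. c t q * zd t) k) has_integral
         mul (restr n b) (restr n (\<lambda>k. line_int (circ R p q) (\<lambda>P. alg_inv m n Ups u (zeta m n a b P) k) 3)) k) T"
        by (rule mul_int) (use Ihas in \<open>simp add: zd_def restr_def\<close>)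
      have hall: "((\<lambda>t. c t k * xd t + mul (restr n a) (\<lambda>q. c t q * yd t) k + mul (restr n b) (\<lambda>q. c t q * zd t) k)
          has_integral LHS) T"
        unfolding LHS_def alg_integral_def Let_def by (intro has_integral_add h1 h2 h3)
      have eqI: "c t k * xd t + mul (restr n a) (\<lambda>q. c t q * yd t) k + mul (restr n b) (\<lambda>q. c t q * zd t) k
          = S t k + Hd t k" if t: "t \<in> T" for t
      proof -
        have WdZ: "Wd t = (\<lambda>q. xd t * e1 q + yd t * restr n a q + zd t * restr n b q)"
          unfolding Wd_def Z_def zeta_def xd_def yd_def zd_def ..
        have "mul (c t) (Wd t) k = xd t * mul (c t) e1 k + yd t * mul (c t) (restr n a) k + zd t * mul (c t) (restr n b) k"
          unfolding WdZ by (rule mul_lin3)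
        also have "\<dots> = c t k * xd t + mul (restr n a) (\<lambda>q. c t q * yd t) k + mul (restr n b) (\<lambda>q. c t q * zd t) k"
          using car(12)[of t] by (simp add: mul_scal comm[of "c t"] mul_one)
        finally show ?thesis using SH[OF t] by simp
      qed
      have "(( \<lambda>t. S t k + Hd t k) has_integral LHS) T"
        using hall by (rule has_integral_eq[rotated]) (simp add: eqI)
      then have "LHS = 2 * of_real pi * \<i> * e1 k" using SH_int[of k] by (rule has_integral_unique)
      then show ?thesis unfolding LHS_def .
    qed
  qed
qed
end
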